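(* Let $\alpha$ and $\gamma$ be compositions such that $\bm\lambda(\alpha)=\bm\lambda(\gamma)$ and $\alpha\ne\gamma$. Then $K_{\alpha,\gamma}=0$, i.e., there is no composition tableau of shape $\alpha$ and content $\gamma$.
   Context: A composition is a finite sequence of positive integers; $\bm\lambda(\alpha)$ denotes the partition obtained by sorting the parts of $\alpha$ in weakly decreasing order. The diagram of a composition $\alpha=(\alpha_1,\dots,\alpha_\ell)$ has $\alpha_i$ cells in row $i$ (rows numbered from the top, cells $(i,j)$ in matrix notation). A composition tableau of shape $\alpha$ is a filling $T$ of the cells with positive integers such that: (CT1) entries weakly decrease left to right along each row; (CT2) entries of the leftmost column strictly increase from top to bottom; (CT3, triple rule) for any two cells $(i,k)$, $(j,k)$ of the diagram with $i<j$: if $\alpha_i\ge\alpha_j$ (and $k\ge2$) then $T(j,k)<T(i,k)$ or $T(i,k-1)<T(j,k)$; if $\alpha_i<\alpha_j$ then $T(j,k)<T(i,k)$ or $T(i,k)<T(j,k+1)$. A tableau has content $\gamma=(\gamma_1,\dots,\gamma_m)$ if for each $1\le i\le m$ the value $i$ occurs exactly $\gamma_i$ times and no other values occur. $K_{\alpha,\gamma}$ is the number of composition tableaux of shape $\alpha$ and content $\gamma$. *)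

theory Defs
  imports Main
begin

definition is_composition :: "nat list \<Rightarrow> bool" where
  "is_composition \<alpha> \<longleftrightarrow> (\<forall>a\<in>set \<alpha>. 0 < a)"

definition comp_partition :: "nat list \<Rightarrow> nat list" where
  "comp_partition \<alpha> = rev (sort \<alpha>)"

(* row lengths, rows numbered from 1 *)
definition row_len :: "nat list \<Rightarrow> nat \<Rightarrow> nat" where
  "row_len \<alpha> i = \<alpha> ! (i - 1)"

definition diagram :: "nat list \<Rightarrow> (nat \<times> nat) set" where
  "diagram \<alpha> = {(i, j). 1 \<le> i \<and> i \<le> length \<alpha> \<and> 1 \<le> j \<and> j \<le> row_len \<alpha> i}"

(* A composition tableau of shape alpha: filling T of the cells with positive
   integers; T is taken to be 0 outside the diagram (normalisation). *)
definition composition_tableau :: "nat list \<Rightarrow> (nat \<Rightarrow> nat \<Rightarrow> nat) \<Rightarrow> bool" where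
  "composition_tableau \<alpha> T \<longleftrightarrow>
     (\<forall>i j. (i, j) \<notin> diagram \<alpha> \<longrightarrow> T i j = 0) \<and>
     (\<forall>(i, j)\<in>diagram \<alpha>. 0 < T i j) \<and>
     \<comment> \<open>CT1: weakly decreasing along rows\<close>
     (\<forall>i j. (i, j) \<in> diagram \<alpha> \<and> (i, Suc j) \<in> diagram \<alpha> \<longrightarrow> T i (Suc j) \<le> T i j) \<and>
     \<comment> \<open>CT2: first column strictly increasing top to bottom\<close>
     (\<forall>i. 1 \<le> i \<and> Suc i \<le> length \<alpha> \<longrightarrow> T i 1 < T (Suc i) 1) \<and>
     \<comment> \<open>CT3: triple rule\<close>
     (\<forall>i j k. (i, k) \<in> diagram \<alpha> \<and> (j, k) \<in> diagram \<alpha> \<and> i < j \<longrightarrow>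
        (row_len \<alpha> i \<ge> row_len \<alpha> j \<and> 2 \<le> k \<longrightarrow> T j k < T i k \<or> T i (k - 1) < T j k) \<and>
        (row_len \<alpha> i < row_len \<alpha> j \<longrightarrow> T j k < T i k \<or> T i k < T j (Suc k)))"

definition has_content :: "nat list \<Rightarrow> nat list \<Rightarrow> (nat \<Rightarrow> nat \<Rightarrow> nat) \<Rightarrow> bool" where
  "has_content \<alpha> \<gamma> T \<longleftrightarrow>
     (\<forall>(i, j)\<in>diagram \<alpha>. 1 \<le> T i j \<and> T i j \<le> length \<gamma>) \<and>
     (\<forall>v. 1 \<le> v \<and> v \<le> length \<gamma> \<longrightarrow>
        card {c \<in> diagram \<alpha>. T (fst c) (snd c) = v} = \<gamma> ! (v - 1))"

definition K_num :: "nat list \<Rightarrow> nat list \<Rightarrow> nat" where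
  "K_num \<alpha> \<gamma> = card {T. composition_tableau \<alpha> T \<and> has_content \<alpha> \<gamma> T}"

end

theory Submission
  imports Defs "HOL-Library.Multiset"
begin

lemma sum_nth_shift: "(\<Sum>i\<in>{1..length xs}. f (xs!(i-1))) = sum_list (map f xs)"
proof -
  have "(\<Sum>i\<in>{1..length xs}. f (xs!(i-1))) = (\<Sum>i<length xs. f (xs!i))"
    unfolding image_Suc_lessThan[symmetric] by (simp add: sum.reindex)
  also have "\<dots> = sum_list (map f xs)" by (simp add: sum_list_sum_nth atLeast0LessThan)
  finally show ?thesis .
qed

lemma sum_nth_mset:
  assumes "mset xs = mset ys"
  shows "(\<Sum>i\<in>{1..length xs}. f (xs!(i-1))) = (\<Sum>i\<in>{1..length ys}. f (ys!(i-1)))"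
proof -
  have "sum_list (map f xs) = sum_mset (image_mset f (mset xs))"
    by (simp flip: sum_mset_sum_list)
  also have "\<dots> = sum_list (map f ys)" using assms by (simp flip: sum_mset_sum_list)
  finally show ?thesis unfolding sum_nth_shift .
qed


lemma diag_iff: "(i,j) \<in> diagram \<alpha> \<longleftrightarrow> 1 \<le> i \<and> i \<le> length \<alpha> \<and> 1 \<le> j \<and> j \<le> row_len \<alpha> i"
  by (simp add: diagram_def)

context
  fixes \<alpha> \<gamma> :: "nat list" and T :: "nat \<Rightarrow> nat \<Rightarrow> nat"
  assumes CT: "composition_tableau \<alpha> T" and HC: "has_content \<alpha> \<gamma> T"
    and comp: "is_composition \<alpha>" and len: "length \<gamma> = length \<alpha>"
begin

lemma ct_out: "(i,j) \<notin> diagram \<alpha> \<Longrightarrow> T i j = 0"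
  using CT[unfolded composition_tableau_def, THEN conjunct1] by blast

lemma ct_row: "(i,j) \<in> diagram \<alpha> \<Longrightarrow> (i, Suc j) \<in> diagram \<alpha> \<Longrightarrow> T i (Suc j) \<le> T i j"
  using CT[unfolded composition_tableau_def, THEN conjunct2, THEN conjunct2, THEN conjunct1] by blast

lemma ct_col1: "1 \<le> i \<Longrightarrow> Suc i \<le> length \<alpha> \<Longrightarrow> T i 1 < T (Suc i) 1"
  using CT[unfolded composition_tableau_def, THEN conjunct2, THEN conjunct2, THEN conjunct2, THEN conjunct1] by blast

lemma ct_tri1: "(i,k) \<in> diagram \<alpha> \<Longrightarrow> (j,k) \<in> diagram \<alpha> \<Longrightarrow> i < j \<Longrightarrow>
   row_len \<alpha> j \<le> row_len \<alpha> i \<Longrightarrow> 2 \<le> k \<Longrightarrow> T j k < T i k \<or> T i (k - 1) < T j k"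
  using CT[unfolded composition_tableau_def, THEN conjunct2, THEN conjunct2, THEN conjunct2, THEN conjunct2] by blast

lemma ct_tri2: "(i,k) \<in> diagram \<alpha> \<Longrightarrow> (j,k) \<in> diagram \<alpha> \<Longrightarrow> i < j \<Longrightarrow>
   row_len \<alpha> i < row_len \<alpha> j \<Longrightarrow> T j k < T i k \<or> T i k < T j (Suc k)"
  using CT[unfolded composition_tableau_def, THEN conjunct2, THEN conjunct2, THEN conjunct2, THEN conjunct2] by blast

lemma vals: "(i,j) \<in> diagram \<alpha> \<Longrightarrow> 1 \<le> T i j \<and> T i j \<le> length \<alpha>"
  using HC len unfolding has_content_def by fastforce

lemma content: "1 \<le> v \<Longrightarrow> v \<le> length \<alpha> \<Longrightarrow>
   card {c \<in> diagram \<alpha>. T (fst c) (snd c) = v} = \<gamma> ! (v - 1)"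
  using HC len unfolding has_content_def by auto

lemma first_col: "1 \<le> i \<Longrightarrow> i \<le> length \<alpha> \<Longrightarrow> (i,1) \<in> diagram \<alpha>"
proof -
  assume a: "1 \<le> i" "i \<le> length \<alpha>"
  then have "\<alpha>!(i-1) \<in> set \<alpha>" by simp
  then have "0 < \<alpha>!(i-1)" using comp unfolding is_composition_def by blast
  then show ?thesis using a by (simp add: diag_iff row_len_def)
qed

lemma col1_lower: "1 \<le> i \<Longrightarrow> i \<le> length \<alpha> \<Longrightarrow> i \<le> T i 1"
proof (induction i)
  case 0 then show ?case by simp
next
  case (Suc i)
  show ?case
  proof (cases "i = 0")
    case True then show ?thesis using vals[OF first_col, of 1] Suc.prems by simp
  next
    case False
    then have "i \<le> T i 1" using Suc by simp
    moreover have "T i 1 < T (Suc i) 1" using ct_col1 False Suc.prems by simp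
    ultimately show ?thesis by simp
  qed
qed

lemma col1_upper: "1 \<le> i \<Longrightarrow> i + d = length \<alpha> \<Longrightarrow> T i 1 + d \<le> length \<alpha>"
proof (induction d arbitrary: i)
  case 0 then show ?case using vals[OF first_col, of i] by simp
next
  case (Suc d)
  then have "T (Suc i) 1 + d \<le> length \<alpha>" by simp
  moreover have "T i 1 < T (Suc i) 1" using ct_col1 Suc.prems by simp
  ultimately show ?case by simp
qed

lemma col1: "1 \<le> i \<Longrightarrow> i \<le> length \<alpha> \<Longrightarrow> T i 1 = i"
  using col1_lower col1_upper[of i "length \<alpha> - i"] by fastforce

lemma row_le1: "(j,c) \<in> diagram \<alpha> \<Longrightarrow> T j c \<le> T j 1"
proof (induction c)
  case 0 then show ?case by (simp add: diag_iff)
next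
  case (Suc c)
  show ?case
  proof (cases "c = 0")
    case True then show ?thesis by simp
  next
    case False
    then have d: "(j,c) \<in> diagram \<alpha>" using Suc.prems by (simp add: diag_iff)
    then have "T j c \<le> T j 1" using Suc.IH by simp
    moreover have "T j (Suc c) \<le> T j c" using ct_row[OF d Suc.prems] .
    ultimately show ?thesis by simp
  qed
qed

lemma row_le: "(j,c) \<in> diagram \<alpha> \<Longrightarrow> T j c \<le> j"
  using row_le1 col1 by (fastforce simp: diag_iff)

lemma col_inj_lt: assumes "(i,k) \<in> diagram \<alpha>" "(j,k) \<in> diagram \<alpha>" "i < j" "T i k = T j k"
  shows False
proof (cases "k = 1")
  case True then show ?thesis using assms col1 by (simp add: diag_iff)
next
  case False
  then have k2: "2 \<le> k" using assms by (simp add: diag_iff)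
  have rowdec: "T j (Suc k) \<le> T j k"
    using ct_row[OF assms(2)] ct_out[of j "Suc k"] by (cases "(j, Suc k) \<in> diagram \<alpha>") auto
  have prev: "(i, k - 1) \<in> diagram \<alpha>" using assms(1) k2 by (simp add: diag_iff, linarith)
  have "T i k \<le> T i (k - 1)" using ct_row[OF prev] assms(1) k2 by simp
  show ?thesis
  proof (cases "row_len \<alpha> j \<le> row_len \<alpha> i")
    case True
    from ct_tri1[OF assms(1,2,3) True k2] assms(4) \<open>T i k \<le> T i (k - 1)\<close> show ?thesis by simp
  next
    case False
    from ct_tri2[OF assms(1,2,3)] False assms(4) rowdec show ?thesis by simp
  qed
qed

lemma col_inj: "(i,k) \<in> diagram \<alpha> \<Longrightarrow> (j,k) \<in> diagram \<alpha> \<Longrightarrow> T i k = T j k \<Longrightarrow> i = j"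
  using col_inj_lt[of i k j] col_inj_lt[of j k i] by (metis linorder_neqE_nat)


lemma col_inj_on: "inj_on (\<lambda>x. T (fst x) (snd x)) {x \<in> diagram \<alpha>. snd x = c}"
proof (rule inj_onI)
  fix x y assume hx: "x \<in> {x \<in> diagram \<alpha>. snd x = c}" and hy: "y \<in> {x \<in> diagram \<alpha>. snd x = c}"
    and ht: "T (fst x) (snd x) = T (fst y) (snd y)"
  have "(fst x, c) \<in> diagram \<alpha>" using hx by (cases x) simp
  moreover have "(fst y, c) \<in> diagram \<alpha>" using hy by (cases y) simp
  moreover have "T (fst x) c = T (fst y) c" using hx hy ht by simp
  ultimately have "fst x = fst y" by (rule col_inj)
  then show "x = y" using hx hy by (simp add: prod_eq_iff)
qed

lemma rl_le_N: "1 \<le> i \<Longrightarrow> i \<le> length \<alpha> \<Longrightarrow> row_len \<alpha> i \<le> sum_list \<alpha>"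
proof -
  assume "1 \<le> i" "i \<le> length \<alpha>"
  then have "\<alpha>!(i-1) \<in> set \<alpha>" by simp
  then show ?thesis unfolding row_len_def by (rule member_le_sum_list) simp
qed

lemma DC: "diagram \<alpha> \<subseteq> {1..length \<alpha>} \<times> {1..sum_list \<alpha>}"
proof
  fix x assume "x \<in> diagram \<alpha>"
  then obtain i j where x: "x = (i,j)" "(i,j) \<in> diagram \<alpha>" by (cases x) auto
  then have "1 \<le> i" "i \<le> length \<alpha>" "1 \<le> j" "j \<le> row_len \<alpha> i" by (auto simp: diag_iff)
  with rl_le_N[of i] show "x \<in> {1..length \<alpha>} \<times> {1..sum_list \<alpha>}" using x by auto
qed

lemma finD: "finite (diagram \<alpha>)"
  using DC finite_subset by blast

lemma key:
  assumes cell: "(j,c0) \<in> diagram \<alpha>" and ms: "mset \<alpha> = mset \<gamma>"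
  shows "c0 \<le> \<gamma>!(T j c0 - 1)"
proof -
  define n where "n = length \<alpha>"
  define N where "N = sum_list \<alpha>"
  define W where "W = {v\<in>{1..n}. c0 \<le> \<gamma>!(v-1)}"
  define R where "R = {i\<in>{1..n}. c0 \<le> row_len \<alpha> i}"
  define D where "D = diagram \<alpha>"
  define E where "E = {x\<in>D. T (fst x) (snd x) \<in> W}"
  define RC where "RC = {x\<in>D. fst x \<in> R}"
  have DC': "D \<subseteq> {1..n} \<times> {1..N}" using DC by (simp add: D_def n_def N_def)
  have fD: "finite D" using finD by (simp add: D_def)
  have fE: "finite E" "finite RC" using fD E_def RC_def by auto
  have fW: "finite W" "finite R" by (auto simp: W_def R_def)
  have cE: "card E = (\<Sum>v\<in>W. \<gamma>!(v-1))"
  proof -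
    have img: "(\<lambda>x. T (fst x) (snd x)) ` E \<subseteq> W" by (auto simp: E_def)
    have "card E = (\<Sum>v\<in>W. card {x\<in>E. T (fst x) (snd x) = v})"
      using sum.group[OF fE(1) fW(1) img, of "\<lambda>_. 1::nat"] by simp
    also have "\<dots> = (\<Sum>v\<in>W. \<gamma>!(v-1))"
    proof (rule sum.cong[OF refl])
      fix v assume v: "v\<in>W"
      then have "{x\<in>E. T (fst x) (snd x) = v} = {x\<in>diagram \<alpha>. T (fst x)(snd x) = v}"
        by (auto simp: E_def D_def)
      with content v show "card {x\<in>E. T (fst x) (snd x) = v} = \<gamma>!(v-1)"
        by (simp add: W_def n_def)
    qed
    finally show ?thesis .
  qed
  have cRC: "card RC = (\<Sum>i\<in>R. row_len \<alpha> i)"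
  proof -
    have img: "fst ` RC \<subseteq> R" by (auto simp: RC_def)
    have "card RC = (\<Sum>i\<in>R. card {x\<in>RC. fst x = i})"
      using sum.group[OF fE(2) fW(2) img, of "\<lambda>_. 1::nat"] by simp
    also have "\<dots> = (\<Sum>i\<in>R. row_len \<alpha> i)"
    proof (rule sum.cong[OF refl])
      fix i assume i: "i\<in>R"
      then have "{x\<in>RC. fst x = i} = {i} \<times> {1..row_len \<alpha> i}"
        by (auto simp: RC_def D_def diag_iff R_def n_def)
      then show "card {x\<in>RC. fst x = i} = row_len \<alpha> i" by simp
    qed
    finally show ?thesis .
  qed
  have msum: "(\<Sum>v\<in>W. \<gamma>!(v-1)) = (\<Sum>i\<in>R. row_len \<alpha> i)"
  proof -
    have "(\<Sum>v\<in>W. \<gamma>!(v-1)) = (\<Sum>v\<in>{1..length \<gamma>}. (\<lambda>x. if c0 \<le> x then x else 0) (\<gamma>!(v-1)))"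
      unfolding W_def n_def by (subst sum.inter_filter) (simp_all add: len)
    also have "\<dots> = (\<Sum>v\<in>{1..length \<alpha>}. (\<lambda>x. if c0 \<le> x then x else 0) (\<alpha>!(v-1)))"
      by (rule sum_nth_mset[OF ms[symmetric]])
    also have "\<dots> = (\<Sum>i\<in>R. row_len \<alpha> i)"
      unfolding R_def n_def row_len_def by (subst sum.inter_filter) simp_all
    finally show ?thesis .
  qed
  have cW: "card W = card R"
  proof -
    have "card W = (\<Sum>v\<in>{1..length \<gamma>}. (\<lambda>x. if c0 \<le> x then 1 else 0::nat) (\<gamma>!(v-1)))"
      unfolding W_def n_def card_eq_sum by (subst sum.inter_filter) (simp_all add: len)
    also have "\<dots> = (\<Sum>v\<in>{1..length \<alpha>}. (\<lambda>x. if c0 \<le> x then 1 else 0::nat) (\<alpha>!(v-1)))"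
      by (rule sum_nth_mset[OF ms[symmetric]])
    also have "\<dots> = card R"
      unfolding R_def n_def row_len_def card_eq_sum by (subst sum.inter_filter) simp_all
    finally show ?thesis .
  qed
  have imgE: "snd ` E \<subseteq> {1..N}" using DC' by (auto simp: E_def)
  have imgR: "snd ` RC \<subseteq> {1..N}" using DC' by (auto simp: RC_def)
  have sE: "card E = (\<Sum>c\<in>{1..N}. card {x\<in>E. snd x = c})"
    using sum.group[OF fE(1) _ imgE, of "\<lambda>_. 1::nat"] by simp
  have sRC: "card RC = (\<Sum>c\<in>{1..N}. card {x\<in>RC. snd x = c})"
    using sum.group[OF fE(2) _ imgR, of "\<lambda>_. 1::nat"] by simp
  have le: "card {x\<in>E. snd x = c} \<le> card {x\<in>RC. snd x = c}" if c: "c \<in> {1..N}" for c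
  proof (cases "c0 \<le> c")
    case True
    then have "{x\<in>RC. snd x = c} = {x\<in>D. snd x = c}" by (auto simp: RC_def R_def D_def diag_iff n_def)
    moreover have "{x\<in>E. snd x = c} \<subseteq> {x\<in>D. snd x = c}" by (auto simp: E_def)
    moreover have "finite {x\<in>D. snd x = c}" using fD by simp
    ultimately show ?thesis by (simp add: card_mono)
  next
    case False
    have "{x\<in>RC. snd x = c} = (\<lambda>i. (i,c)) ` R" using c False
      by (force simp: RC_def R_def D_def diag_iff n_def)
    then have "card {x\<in>RC. snd x = c} = card R" by (simp add: card_image inj_on_def)
    moreover have "card {x\<in>E. snd x = c} \<le> card W"
    proof (rule card_inj_on_le[where f = "\<lambda>x. T (fst x) (snd x)"])
      show "inj_on (\<lambda>x. T (fst x) (snd x)) {x \<in> E. snd x = c}"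
        by (rule inj_on_subset[OF col_inj_on]) (auto simp: E_def D_def)
      show "(\<lambda>x. T (fst x) (snd x)) ` {x \<in> E. snd x = c} \<subseteq> W" by (auto simp: E_def)
      show "finite W" by (rule fW)
    qed
    ultimately show ?thesis using cW by simp
  qed
  have c0N: "c0 \<in> {1..N}" using cell DC' by (auto simp: D_def)
  have eqc: "card {x\<in>E. snd x = c0} = card {x\<in>RC. snd x = c0}"
    using sum_mono_inv[of "\<lambda>c. card {x\<in>E. snd x = c}" "{1..N}" "\<lambda>c. card {x\<in>RC. snd x = c}", OF _ le c0N]
      sE sRC cE cRC msum by simp
  have "{x\<in>RC. snd x = c0} = {x\<in>D. snd x = c0}" by (auto simp: RC_def R_def D_def diag_iff n_def)
  then have eqc2: "card {x\<in>E. snd x = c0} = card {x\<in>D. snd x = c0}" using eqc by simp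
  have sub: "{x\<in>E. snd x = c0} \<subseteq> {x\<in>D. snd x = c0}" by (auto simp: E_def)
  have "finite {x\<in>D. snd x = c0}" using fD by simp
  then have eqs: "{x\<in>E. snd x = c0} = {x\<in>D. snd x = c0}"
    by (rule card_subset_eq[OF _ sub eqc2])
  have "(j,c0) \<in> {x\<in>D. snd x = c0}" using cell by (simp add: D_def)
  then have "(j,c0) \<in> {x\<in>E. snd x = c0}" by (simp only: eqs)
  then have "(j,c0) \<in> E" by simp
  then have "T j c0 \<in> W" by (simp add: E_def)
  then show ?thesis by (simp add: W_def)
qed

lemma cardWR: "mset \<alpha> = mset \<gamma> \<Longrightarrow>
  card {v\<in>{1..length \<alpha>}. c \<le> \<gamma>!(v-1)} = card {i\<in>{1..length \<alpha>}. c \<le> row_len \<alpha> i}"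
proof -
  assume ms: "mset \<alpha> = mset \<gamma>"
  have "card {v\<in>{1..length \<alpha>}. c \<le> \<gamma>!(v-1)} = (\<Sum>v\<in>{1..length \<gamma>}. (\<lambda>x. if c \<le> x then 1 else 0::nat) (\<gamma>!(v-1)))"
    unfolding card_eq_sum by (subst sum.inter_filter) (simp_all add: len)
  also have "\<dots> = (\<Sum>v\<in>{1..length \<alpha>}. (\<lambda>x. if c \<le> x then 1 else 0::nat) (\<alpha>!(v-1)))"
    by (rule sum_nth_mset[OF ms[symmetric]])
  also have "\<dots> = card {i\<in>{1..length \<alpha>}. c \<le> row_len \<alpha> i}"
    unfolding row_len_def card_eq_sum by (subst sum.inter_filter) simp_all
  finally show ?thesis .
qed

lemma col_slice: "1 \<le> c \<Longrightarrow> {x\<in>diagram \<alpha>. snd x = c} = (\<lambda>i. (i,c)) ` {i\<in>{1..length \<alpha>}. c \<le> row_len \<alpha> i}"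
  by (force simp: diag_iff)

lemma col_full:
  assumes ms: "mset \<alpha> = mset \<gamma>" and c: "1 \<le> c" and v: "1 \<le> v" "v \<le> length \<alpha>" "c \<le> \<gamma>!(v-1)"
  shows "\<exists>r. (r,c) \<in> diagram \<alpha> \<and> T r c = v"
proof -
  define W where "W = {v\<in>{1..length \<alpha>}. c \<le> \<gamma>!(v-1)}"
  define C where "C = {x\<in>diagram \<alpha>. snd x = c}"
  define S where "S = (\<lambda>x. T (fst x) (snd x)) ` C"
  have sub: "S \<subseteq> W"
  proof
    fix w assume "w \<in> S"
    then obtain a where a: "(a,c) \<in> diagram \<alpha>" "w = T a c" by (auto simp: S_def C_def)
    then show "w \<in> W" using key[OF a(1) ms] vals[OF a(1)] by (simp add: W_def)
  qed
  have "card S = card C" unfolding S_def C_def by (rule card_image[OF col_inj_on])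
  also have "\<dots> = card {i\<in>{1..length \<alpha>}. c \<le> row_len \<alpha> i}"
    unfolding C_def col_slice[OF c] by (simp add: card_image inj_on_def)
  also have "\<dots> = card W" unfolding W_def using cardWR[OF ms] by simp
  finally have "S = W" using card_subset_eq[OF _ sub] by (simp add: W_def)
  moreover have "v \<in> W" using v by (simp add: W_def)
  ultimately have "v \<in> S" by simp
  then show ?thesis by (auto simp: S_def C_def)
qed

lemma all_cells:
  assumes ms: "mset \<alpha> = mset \<gamma>"
  shows "(j,c) \<in> diagram \<alpha> \<Longrightarrow> T j c = j"
proof (induction c arbitrary: j rule: less_induct)
  case (less c)
  note IHc = less.IH
  show ?case using less.prems
  proof (induction j rule: less_induct)
    case (less j)
    note IHj = less.IH
    note cell = less.prems
    show ?case
    proof (cases "c = 1")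
      case True then show ?thesis using cell col1 by (simp add: diag_iff)
    next
      case False
      then have c2: "2 \<le> c" using cell by (simp add: diag_iff)
      define v where "v = T j c"
      have v1: "1 \<le> v" "v \<le> j" using vals[OF cell] row_le[OF cell] by (simp_all add: v_def)
      have jn: "j \<le> length \<alpha>" using cell by (simp add: diag_iff)
      show ?thesis
      proof (rule ccontr)
        assume "T j c \<noteq> j"
        then have vj: "v < j" using v1 by (simp add: v_def)
        have "c \<le> \<gamma>!(v-1)" using key[OF cell ms] by (simp add: v_def)
        then have g1: "c-1 \<le> \<gamma>!(v-1)" by simp
        have c1: "1 \<le> c-1" using c2 by simp
        have vn: "v \<le> length \<alpha>" using v1 jn by simp
        obtain r where r: "(r, c-1) \<in> diagram \<alpha>" "T r (c-1) = v"
          using col_full[OF ms c1 v1(1) vn g1] by blast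
        have "T r (c-1) = r" using IHc[of "c-1" r] r c2 by simp
        then have rv: "r = v" using r by simp
        have vc1: "(v, c-1) \<in> diagram \<alpha>" using r rv by simp
        have jc1: "(j, c-1) \<in> diagram \<alpha>" using cell c2 by (simp add: diag_iff, linarith)
        have Tv1: "T v (c-1) = v" using r rv by simp
        have Tj1: "T j (c-1) = j" using IHc[of "c-1" j] jc1 c2 by simp
        have rowdec: "T j (Suc c) \<le> T j c"
          using ct_row[OF cell] ct_out[of j "Suc c"] by (cases "(j, Suc c) \<in> diagram \<alpha>") auto
        show False
        proof (cases "c \<le> row_len \<alpha> v")
          case True
          then have vc: "(v,c) \<in> diagram \<alpha>" using vc1 c2 by (simp add: diag_iff)
          have Tv: "T v c = v" using IHj[OF vj vc] .
          show False
          proof (cases "row_len \<alpha> j \<le> row_len \<alpha> v")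
            case True
            from ct_tri1[OF vc cell vj True c2] Tv Tv1 show False by (simp add: v_def)
          next
            case False
            from ct_tri2[OF vc cell vj] False Tv rowdec show False by (simp add: v_def)
          qed
        next
          case False
          then have "row_len \<alpha> v < row_len \<alpha> j" using cell by (simp add: diag_iff)
          from ct_tri2[OF vc1 jc1 vj this] Tv1 Tj1 c2 vj show False by (simp add: v_def)
        qed
      qed
    qed
  qed
qed
end


lemma no_tableau:
  assumes comp: "is_composition \<alpha>" and eq: "comp_partition \<alpha> = comp_partition \<gamma>"
    and ne: "\<alpha> \<noteq> \<gamma>" and CT: "composition_tableau \<alpha> T" and HC: "has_content \<alpha> \<gamma> T"
  shows False
proof -
  have "sort \<alpha> = sort \<gamma>" using eq by (simp add: comp_partition_def)
  then have ms: "mset \<alpha> = mset \<gamma>" by (metis mset_sort)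
  then have len: "length \<gamma> = length \<alpha>" by (metis size_mset)
  have all: "\<And>j c. (j,c) \<in> diagram \<alpha> \<Longrightarrow> T j c = j"
    using all_cells[OF CT HC comp len ms] by blast
  have "\<gamma>!(v-1) = \<alpha>!(v-1)" if v: "1 \<le> v" "v \<le> length \<alpha>" for v
  proof -
    have "{x \<in> diagram \<alpha>. T (fst x) (snd x) = v} = {v} \<times> {1..row_len \<alpha> v}"
      using all v by (auto simp: diag_iff)
    then have "card {x \<in> diagram \<alpha>. T (fst x) (snd x) = v} = \<alpha>!(v-1)" by (simp add: row_len_def)
    then show ?thesis using content[OF CT HC comp len v] by simp
  qed
  then have "\<forall>i<length \<alpha>. \<alpha>!i = \<gamma>!i"
    by (metis Suc_leI diff_Suc_1 le_add1 plus_1_eq_Suc)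
  then have "\<alpha> = \<gamma>" using len by (simp add: nth_equalityI)
  then show False using ne by simp
qed

theorem lemma5p2:
  fixes \<alpha> \<gamma> :: "nat list"
  assumes "is_composition \<alpha>" and "is_composition \<gamma>"
    and "comp_partition \<alpha> = comp_partition \<gamma>"
    and "\<alpha> \<noteq> \<gamma>"
  shows "K_num \<alpha> \<gamma> = 0 \<and> \<not> (\<exists>T. composition_tableau \<alpha> T \<and> has_content \<alpha> \<gamma> T)"
proof -
  have n: "\<not> (\<exists>T. composition_tableau \<alpha> T \<and> has_content \<alpha> \<gamma> T)"
    using no_tableau[OF assms(1) assms(3) assms(4)] by blast
  then have e: "{T. composition_tableau \<alpha> T \<and> has_content \<alpha> \<gamma> T} = {}" by blast
  show ?thesis unfolding K_num_def e using n by simp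
qed

end
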